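(* Let $M\geq 1$. A seller holds $M$ units of a single good; the seller values a bundle of $i$ units at $\sigma_i$ and a buyer values a bundle of $i$ units at $\beta_i$ ($i=0,\dots,M$, with $\beta_0=0$). The price per unit $p$ is fixed exogenously and both agents have utilities quasi-linear in money. Then the competitive ratio of any DSIC mechanism is (i) at most $1/M$ with general valuations, and (ii) at most $1/H_M$ with submodular valuations, where $H_M=\sum_{j=1}^M\frac1j$.
   Context: Trading $i$ units at price $p$ gives the buyer utility $b_i=\beta_i-p\,i$ and the seller utility $s_i=p\,i+\sigma_{M-i}-\sigma_M$ (so $b_0=s_0=0$ corresponds to no trade). A mechanism receives the agents' reported valuations and outputs a probability distribution $(r_0,\dots,r_M)$ over the number of units traded (at price $p$ per unit). It is DSIC if for each agent reporting the true valuation maximizes his expected utility ($\sum_i r_i b_i$ for the buyer, $\sum_i r_i s_i$ for the seller) whatever the other agent reports. The optimal gain-from-trade subject to individual rationality is $OPT=\max\{b_i+s_i: 0\leq i\leq M,\ b_i\geq 0,\ s_i\geq 0\}$; the mechanism's gain under truthful reports is $G=\sum_{i=1}^M r_i(b_i+s_i)$, and its competitive ratio is the minimum of $G/OPT$ over all admissible valuation profiles. A valuation $(v_i)_{i=0}^M$ is submodular (decreasing marginal returns) if $v_{i+1}-v_i\leq v_i-v_{i-1}$ for all $1\leq i\leq M-1$; in case (ii) both $\beta$ and $\sigma$ are submodular and admissible profiles (true and reported) are the submodular ones. *)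

theory Defs
  imports Complex_Main "HOL-Library.Extended_Real"
begin

text \<open>Valuations are functions nat => real; only the values at 0..M matter,
  admissible valuations are normalised to be 0 beyond M.\<close>

definition buyer_util :: "real \<Rightarrow> (nat \<Rightarrow> real) \<Rightarrow> nat \<Rightarrow> real" where
  "buyer_util p \<beta> i = \<beta> i - p * real i"

definition seller_util :: "nat \<Rightarrow> real \<Rightarrow> (nat \<Rightarrow> real) \<Rightarrow> nat \<Rightarrow> real" where
  "seller_util M p \<sigma> i = p * real i + \<sigma> (M - i) - \<sigma> M"

definition OPT :: "nat \<Rightarrow> real \<Rightarrow> (nat \<Rightarrow> real) \<Rightarrow> (nat \<Rightarrow> real) \<Rightarrow> real" where
  "OPT M p \<beta> \<sigma> = Max {buyer_util p \<beta> i + seller_util M p \<sigma> i | i.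
      i \<le> M \<and> buyer_util p \<beta> i \<ge> 0 \<and> seller_util M p \<sigma> i \<ge> 0}"

definition gain :: "nat \<Rightarrow> real \<Rightarrow> (nat \<Rightarrow> real) \<Rightarrow> (nat \<Rightarrow> real) \<Rightarrow> (nat \<Rightarrow> real) \<Rightarrow> real" where
  "gain M p r \<beta> \<sigma> = (\<Sum>i=1..M. r i * (buyer_util p \<beta> i + seller_util M p \<sigma> i))"

definition is_distribution :: "nat \<Rightarrow> (nat \<Rightarrow> real) \<Rightarrow> bool" where
  "is_distribution M r \<longleftrightarrow> (\<forall>i\<le>M. r i \<ge> 0) \<and> (\<Sum>i\<le>M. r i) = 1"

definition general_val :: "nat \<Rightarrow> (nat \<Rightarrow> real) \<Rightarrow> bool" where
  "general_val M v \<longleftrightarrow> (\<forall>i>M. v i = 0)"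

definition submodular_val :: "nat \<Rightarrow> (nat \<Rightarrow> real) \<Rightarrow> bool" where
  "submodular_val M v \<longleftrightarrow> general_val M v \<and>
     (\<forall>i. 1 \<le> i \<and> i \<le> M - 1 \<longrightarrow> v (i+1) - v i \<le> v i - v (i - 1))"

text \<open>A mechanism maps reported (buyer, seller) valuations to a distribution
  over the number of traded units. DSIC w.r.t. admissible buyer domain B and
  seller domain S.\<close>
definition DSIC :: "nat \<Rightarrow> real \<Rightarrow> ((nat \<Rightarrow> real) \<Rightarrow> bool) \<Rightarrow> ((nat \<Rightarrow> real) \<Rightarrow> bool)
     \<Rightarrow> ((nat \<Rightarrow> real) \<Rightarrow> (nat \<Rightarrow> real) \<Rightarrow> (nat \<Rightarrow> real)) \<Rightarrow> bool" where
  "DSIC M p B S mech \<longleftrightarrow>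
     (\<forall>\<beta> \<sigma>. B \<beta> \<longrightarrow> S \<sigma> \<longrightarrow> is_distribution M (mech \<beta> \<sigma>)) \<and>
     (\<forall>\<beta> \<beta>' \<sigma>. B \<beta> \<longrightarrow> B \<beta>' \<longrightarrow> S \<sigma> \<longrightarrow>
        (\<Sum>i\<le>M. mech \<beta>' \<sigma> i * buyer_util p \<beta> i) \<le> (\<Sum>i\<le>M. mech \<beta> \<sigma> i * buyer_util p \<beta> i)) \<and>
     (\<forall>\<beta> \<sigma> \<sigma>'. B \<beta> \<longrightarrow> S \<sigma> \<longrightarrow> S \<sigma>' \<longrightarrow>
        (\<Sum>i\<le>M. mech \<beta> \<sigma>' i * seller_util M p \<sigma> i) \<le> (\<Sum>i\<le>M. mech \<beta> \<sigma> i * seller_util M p \<sigma> i))"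

definition competitive_ratio :: "nat \<Rightarrow> real \<Rightarrow> ((nat \<Rightarrow> real) \<Rightarrow> bool) \<Rightarrow> ((nat \<Rightarrow> real) \<Rightarrow> bool)
     \<Rightarrow> ((nat \<Rightarrow> real) \<Rightarrow> (nat \<Rightarrow> real) \<Rightarrow> (nat \<Rightarrow> real)) \<Rightarrow> ereal" where
  "competitive_ratio M p B S mech =
     Inf {ereal (gain M p (mech \<beta> \<sigma>) \<beta> \<sigma> / OPT M p \<beta> \<sigma>) | \<beta> \<sigma>.
            B \<beta> \<and> S \<sigma> \<and> OPT M p \<beta> \<sigma> > 0}"

definition buyer_general :: "nat \<Rightarrow> (nat \<Rightarrow> real) \<Rightarrow> bool" where
  "buyer_general M \<beta> \<longleftrightarrow> general_val M \<beta> \<and> \<beta> 0 = 0"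

definition buyer_submodular :: "nat \<Rightarrow> (nat \<Rightarrow> real) \<Rightarrow> bool" where
  "buyer_submodular M \<beta> \<longleftrightarrow> submodular_val M \<beta> \<and> \<beta> 0 = 0"

end

theory Submission
  imports Defs
begin

definition bt :: "nat \<Rightarrow> real \<Rightarrow> (nat \<Rightarrow> real) \<Rightarrow> real \<Rightarrow> nat \<Rightarrow> real" where
  "bt M p x a = (\<lambda>i. if i \<le> M then a * x i + p * real i else 0)"

definition st :: "nat \<Rightarrow> real \<Rightarrow> (nat \<Rightarrow> real) \<Rightarrow> real \<Rightarrow> nat \<Rightarrow> nat \<Rightarrow> real" where
  "st M p x d j = (\<lambda>k. if k < M then d * (x j - x (M - k)) - p * real (M - k) else 0)"

definition sv :: "(nat \<Rightarrow> real) \<Rightarrow> nat \<Rightarrow> nat \<Rightarrow> real" where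
  "sv x j i = (if i = 0 then 0 else x j - x i)"

lemma bu_bt: "i \<le> M \<Longrightarrow> buyer_util p (bt M p x a) i = a * x i"
  by (simp add: buyer_util_def bt_def)

lemma su_st: "i \<le> M \<Longrightarrow> seller_util M p (st M p x d j) i = d * sv x j i"
  by (cases "i = 0") (auto simp: seller_util_def st_def sv_def of_nat_diff algebra_simps)

lemma sum_split0: "(\<Sum>i\<le>(M::nat). f i) = f 0 + (\<Sum>i=1..M. (f i :: real))"
proof -
  have "{..M} = insert 0 {1..M}" by (force simp: atLeastAtMost_iff)
  thus ?thesis by (simp add: sum.insert)
qed

lemma OPT_ge:
  assumes "i \<le> M" "buyer_util p \<beta> i \<ge> 0" "seller_util M p \<sigma> i \<ge> 0"
  shows "buyer_util p \<beta> i + seller_util M p \<sigma> i \<le> OPT M p \<beta> \<sigma>"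
proof -
  let ?S = "{buyer_util p \<beta> i + seller_util M p \<sigma> i | i. i \<le> M \<and> buyer_util p \<beta> i \<ge> 0 \<and> seller_util M p \<sigma> i \<ge> 0}"
  have "?S \<subseteq> (\<lambda>i. buyer_util p \<beta> i + seller_util M p \<sigma> i) ` {..M}" by auto
  hence "finite ?S" by (rule finite_subset) simp
  moreover have "buyer_util p \<beta> i + seller_util M p \<sigma> i \<in> ?S" using assms by blast
  ultimately show ?thesis unfolding OPT_def by (rule Max_ge)
qed

lemma sum_sv:
  assumes "x 0 = 0"
  shows "(\<Sum>i\<le>M. \<rho> i * sv x j i) = x j * (\<Sum>i=1..M. \<rho> i) - (\<Sum>i\<le>M. \<rho> i * x i)"
proof -
  have "(\<Sum>i\<le>M. \<rho> i * sv x j i) = (\<Sum>i=1..M. \<rho> i * (x j - x i))"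
    by (simp add: sum_split0[of _ M] sv_def)
  also have "\<dots> = x j * (\<Sum>i=1..M. \<rho> i) - (\<Sum>i=1..M. \<rho> i * x i)"
    by (simp add: algebra_simps sum_subtractf sum_distrib_left)
  also have "(\<Sum>i=1..M. \<rho> i * x i) = (\<Sum>i\<le>M. \<rho> i * x i)"
    by (simp add: sum_split0[of _ M] assms)
  finally show ?thesis .
qed

lemma gain_eq:
  "gain M p r (bt M p x a) (st M p x d j) = (\<Sum>i=1..M. r i * (a * x i + d * sv x j i))"
  unfolding gain_def by (rule sum.cong) (auto simp: bu_bt su_st)

lemma dist_facts:
  assumes "is_distribution M r"
  shows "\<And>i. i \<le> M \<Longrightarrow> r i \<ge> 0" "(\<Sum>i=1..M. r i) \<le> 1"
proof -
  show "\<And>i. i \<le> M \<Longrightarrow> r i \<ge> 0" using assms unfolding is_distribution_def by auto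
  have "(\<Sum>i\<le>M. r i) = 1" using assms unfolding is_distribution_def by auto
  moreover have "r 0 \<ge> 0" using assms unfolding is_distribution_def by auto
  ultimately show "(\<Sum>i=1..M. r i) \<le> 1" using sum_split0[of r M] by linarith
qed

lemma key:
  fixes M :: nat and p c :: real and x :: "nat \<Rightarrow> real"
    and mech :: "(nat \<Rightarrow> real) \<Rightarrow> (nat \<Rightarrow> real) \<Rightarrow> (nat \<Rightarrow> real)"
  assumes M1: "M \<ge> 1" and ds: "DSIC M p Bd Sd mech"
    and x0: "x 0 = 0" and xpos: "\<And>i. 1 \<le> i \<Longrightarrow> i \<le> M \<Longrightarrow> 0 < x i"
    and xmono: "\<And>i. i < M \<Longrightarrow> x i \<le> x (Suc i)"
    and Bin: "\<And>a. a \<ge> 1 \<Longrightarrow> Bd (bt M p x a)"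
    and Sin: "\<And>d j. d \<ge> 1 \<Longrightarrow> 1 \<le> j \<Longrightarrow> j \<le> M \<Longrightarrow> Sd (st M p x d j)"
    and cpos: "c > 0"
    and H: "\<And>\<beta> \<sigma>. Bd \<beta> \<Longrightarrow> Sd \<sigma> \<Longrightarrow> OPT M p \<beta> \<sigma> > 0 \<Longrightarrow>
              c \<le> gain M p (mech \<beta> \<sigma>) \<beta> \<sigma> / OPT M p \<beta> \<sigma>"
  shows "c * (1 + (\<Sum>k\<in>{1..<M}. 1 - x k / x (Suc k))) \<le> 1"
proof -
  define r where "r a d j = mech (bt M p x a) (st M p x d j)" for a d j
  define E where "E j = (\<Sum>i\<le>M. r 1 1 j i * x i)" for j
  define m where "m j = (\<Sum>i=1..M. r 1 1 j i)" for j
  have xnn: "\<And>i. i \<le> M \<Longrightarrow> 0 \<le> x i"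
    using xpos x0 by (case_tac "i = 0") (auto intro: less_imp_le)
  have dist: "\<And>a d j. a \<ge> 1 \<Longrightarrow> d \<ge> 1 \<Longrightarrow> 1 \<le> j \<Longrightarrow> j \<le> M \<Longrightarrow> is_distribution M (r a d j)"
  proof -
    fix a d :: real and j :: nat
    assume "a \<ge> 1" "d \<ge> 1" "1 \<le> j" "j \<le> M"
    hence "Bd (bt M p x a)" "Sd (st M p x d j)" using Bin Sin by auto
    moreover have "\<forall>\<beta> \<sigma>. Bd \<beta> \<longrightarrow> Sd \<sigma> \<longrightarrow> is_distribution M (mech \<beta> \<sigma>)"
      using ds unfolding DSIC_def by (elim conjE)
    ultimately show "is_distribution M (r a d j)" unfolding r_def by blast
  qed
  have bIC: "\<And>\<beta> \<beta>' \<sigma>. Bd \<beta> \<Longrightarrow> Bd \<beta>' \<Longrightarrow> Sd \<sigma> \<Longrightarrow>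
        (\<Sum>i\<le>M. mech \<beta>' \<sigma> i * buyer_util p \<beta> i) \<le> (\<Sum>i\<le>M. mech \<beta> \<sigma> i * buyer_util p \<beta> i)"
  proof -
    have "\<forall>\<beta> \<beta>' \<sigma>. Bd \<beta> \<longrightarrow> Bd \<beta>' \<longrightarrow> Sd \<sigma> \<longrightarrow>
        (\<Sum>i\<le>M. mech \<beta>' \<sigma> i * buyer_util p \<beta> i) \<le> (\<Sum>i\<le>M. mech \<beta> \<sigma> i * buyer_util p \<beta> i)"
      using ds unfolding DSIC_def by (elim conjE)
    thus "\<And>\<beta> \<beta>' \<sigma>. Bd \<beta> \<Longrightarrow> Bd \<beta>' \<Longrightarrow> Sd \<sigma> \<Longrightarrow>
        (\<Sum>i\<le>M. mech \<beta>' \<sigma> i * buyer_util p \<beta> i) \<le> (\<Sum>i\<le>M. mech \<beta> \<sigma> i * buyer_util p \<beta> i)" by blast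
  qed
  have sIC: "\<And>\<beta> \<sigma> \<sigma>'. Bd \<beta> \<Longrightarrow> Sd \<sigma> \<Longrightarrow> Sd \<sigma>' \<Longrightarrow>
        (\<Sum>i\<le>M. mech \<beta> \<sigma>' i * seller_util M p \<sigma> i) \<le> (\<Sum>i\<le>M. mech \<beta> \<sigma> i * seller_util M p \<sigma> i)"
  proof -
    have "\<forall>\<beta> \<sigma> \<sigma>'. Bd \<beta> \<longrightarrow> Sd \<sigma> \<longrightarrow> Sd \<sigma>' \<longrightarrow>
        (\<Sum>i\<le>M. mech \<beta> \<sigma>' i * seller_util M p \<sigma> i) \<le> (\<Sum>i\<le>M. mech \<beta> \<sigma> i * seller_util M p \<sigma> i)"
      using ds unfolding DSIC_def by (elim conjE)
    thus "\<And>\<beta> \<sigma> \<sigma>'. Bd \<beta> \<Longrightarrow> Sd \<sigma> \<Longrightarrow> Sd \<sigma>' \<Longrightarrow>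
        (\<Sum>i\<le>M. mech \<beta> \<sigma>' i * seller_util M p \<sigma> i) \<le> (\<Sum>i\<le>M. mech \<beta> \<sigma> i * seller_util M p \<sigma> i)" by blast
  qed
  have bsum: "\<And>\<rho> a. (\<Sum>i\<le>M. \<rho> i * buyer_util p (bt M p x a) i) = a * (\<Sum>i\<le>M. \<rho> i * x i)"
    by (simp add: bu_bt sum_distrib_left algebra_simps)
  have ssum: "\<And>\<rho> d j. (\<Sum>i\<le>M. \<rho> i * seller_util M p (st M p x d j) i) = d * (\<Sum>i\<le>M. \<rho> i * sv x j i)"
    by (simp add: su_st sum_distrib_left algebra_simps)
  have bscale: "(\<Sum>i\<le>M. r a 1 j i * x i) = E j" if "a \<ge> 1" "1 \<le> j" "j \<le> M" for a j
  proof -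
    have B1: "Bd (bt M p x 1)" and Ba: "Bd (bt M p x a)" and S1: "Sd (st M p x 1 j)"
      using Bin Sin that by auto
    have "a * E j \<le> a * (\<Sum>i\<le>M. r a 1 j i * x i)"
      using bIC[OF Ba B1 S1] unfolding bsum r_def E_def .
    hence 1: "E j \<le> (\<Sum>i\<le>M. r a 1 j i * x i)" using that by simp
    have "1 * (\<Sum>i\<le>M. r a 1 j i * x i) \<le> 1 * E j"
      using bIC[OF B1 Ba S1] unfolding bsum r_def E_def .
    with 1 show ?thesis by simp
  qed
  have Eb: "c * x j \<le> E j" if j: "1 \<le> j" "j \<le> M" for j
  proof (rule ccontr)
    assume "\<not> c * x j \<le> E j"
    hence dpos: "c * x j - E j > 0" by simp
    define a where "a = 1 + x j / (c * x j - E j)"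
    have xj: "x j > 0" using xpos j by auto
    have a1: "a \<ge> 1" unfolding a_def using xj dpos by simp
    have Ba: "Bd (bt M p x a)" and S1: "Sd (st M p x 1 j)" using Bin Sin a1 j by auto
    have di: "is_distribution M (r a 1 j)" using dist a1 j by simp
    note dfs = dist_facts[OF di]
    have Oge: "a * x j \<le> OPT M p (bt M p x a) (st M p x 1 j)"
      using OPT_ge[of j M p "bt M p x a" "st M p x 1 j"] j a1 xj
      by (simp add: bu_bt su_st sv_def)
    have Opos: "OPT M p (bt M p x a) (st M p x 1 j) > 0"
    proof -
      have "a * x j > 0" using a1 xj by simp
      thus ?thesis using Oge by linarith
    qed
    have "c \<le> gain M p (r a 1 j) (bt M p x a) (st M p x 1 j) / OPT M p (bt M p x a) (st M p x 1 j)"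
      using H[OF Ba S1 Opos] unfolding r_def .
    hence g1: "c * OPT M p (bt M p x a) (st M p x 1 j) \<le> gain M p (r a 1 j) (bt M p x a) (st M p x 1 j)"
      using Opos by (simp add: pos_le_divide_eq)
    have geq: "gain M p (r a 1 j) (bt M p x a) (st M p x 1 j)
        = a * (\<Sum>i=1..M. r a 1 j i * x i) + (\<Sum>i=1..M. r a 1 j i * sv x j i)"
      by (simp add: gain_eq sum.distrib sum_distrib_left algebra_simps)
    have s1: "(\<Sum>i=1..M. r a 1 j i * x i) = E j"
      using bscale[OF a1 j] sum_split0[of "\<lambda>i. r a 1 j i * x i" M] x0 by simp
    have "(\<Sum>i=1..M. r a 1 j i * sv x j i) \<le> (\<Sum>i=1..M. r a 1 j i * x j)"
    proof (rule sum_mono)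
      fix i assume i: "i \<in> {1..M}"
      hence "r a 1 j i \<ge> 0" "x i \<ge> 0" using dfs(1) xnn by auto
      thus "r a 1 j i * sv x j i \<le> r a 1 j i * x j" using i
        by (simp add: sv_def mult_left_mono)
    qed
    also have "\<dots> = x j * (\<Sum>i=1..M. r a 1 j i)" by (simp add: sum_distrib_left mult.commute)
    also have "\<dots> \<le> x j" using dfs(2) xj by (simp add: mult_left_le)
    finally have s2: "(\<Sum>i=1..M. r a 1 j i * sv x j i) \<le> x j" .
    have "c * (a * x j) \<le> c * OPT M p (bt M p x a) (st M p x 1 j)"
      using Oge cpos by simp
    have "gain M p (r a 1 j) (bt M p x a) (st M p x 1 j) = a * E j + (\<Sum>i=1..M. r a 1 j i * sv x j i)"
      using geq s1 by simp
    with g1 s2 \<open>c * (a * x j) \<le> c * OPT M p (bt M p x a) (st M p x 1 j)\<close>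
    have "c * (a * x j) \<le> a * E j + x j" by linarith
    hence "a * (c * x j - E j) \<le> x j" by (simp add: algebra_simps)
    moreover have "a * (c * x j - E j) = (c * x j - E j) + x j"
      unfolding a_def using dpos by (simp add: field_simps)
    ultimately show False using dpos by linarith
  qed
  have U0: "0 \<le> (\<Sum>i\<le>M. r 1 1 1 i * sv x 1 i)"
  proof (rule ccontr)
    define U where "U = (\<Sum>i\<le>M. r 1 1 1 i * sv x 1 i)"
    assume "\<not> 0 \<le> (\<Sum>i\<le>M. r 1 1 1 i * sv x 1 i)"
    hence Un: "U < 0" unfolding U_def by simp
    define K where "K = (\<Sum>i=1..M. x i)"
    have K0: "K \<ge> 0" unfolding K_def using xnn by (intro sum_nonneg) auto
    define d where "d = 1 + K / (- U)"
    have d1: "d \<ge> 1" unfolding d_def using K0 Un by (simp add: divide_nonneg_neg)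
    have j1: "1 \<le> (1::nat)" "1 \<le> M" using M1 by auto
    have B1: "Bd (bt M p x 1)" and S1: "Sd (st M p x 1 1)" and Sd': "Sd (st M p x d 1)"
      using Bin Sin d1 j1 by auto
    have di: "is_distribution M (r 1 d 1)" using dist d1 j1 by simp
    note dfs = dist_facts[OF di]
    have e1: "d * U \<le> d * (\<Sum>i\<le>M. r 1 d 1 i * sv x 1 i)"
      using sIC[OF B1 Sd' S1] unfolding ssum r_def U_def .
    have e2: "1 * (\<Sum>i\<le>M. r 1 d 1 i * sv x 1 i) \<le> 1 * U"
      using sIC[OF B1 S1 Sd'] unfolding ssum r_def U_def .
    have Ueq: "(\<Sum>i\<le>M. r 1 d 1 i * sv x 1 i) = U" using e1 e2 d1 by simp
    have x1: "x 1 > 0" using xpos j1 by auto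
    have Oge: "x 1 \<le> OPT M p (bt M p x 1) (st M p x d 1)"
      using OPT_ge[of 1 M p "bt M p x 1" "st M p x d 1"] j1 x1
      by (simp add: bu_bt su_st sv_def)
    have Opos: "OPT M p (bt M p x 1) (st M p x d 1) > 0" using Oge x1 by linarith
    have "c \<le> gain M p (r 1 d 1) (bt M p x 1) (st M p x d 1) / OPT M p (bt M p x 1) (st M p x d 1)"
      using H[OF B1 Sd' Opos] unfolding r_def .
    hence g1: "c * OPT M p (bt M p x 1) (st M p x d 1) \<le> gain M p (r 1 d 1) (bt M p x 1) (st M p x d 1)"
      using Opos by (simp add: pos_le_divide_eq)
    have geq: "gain M p (r 1 d 1) (bt M p x 1) (st M p x d 1)
        = (\<Sum>i=1..M. r 1 d 1 i * x i) + d * (\<Sum>i=1..M. r 1 d 1 i * sv x 1 i)"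
      by (simp add: gain_eq sum.distrib sum_distrib_left algebra_simps)
    have s1: "(\<Sum>i=1..M. r 1 d 1 i * sv x 1 i) = U"
      using Ueq sum_split0[of "\<lambda>i. r 1 d 1 i * sv x 1 i" M] by (simp add: sv_def)
    have "(\<Sum>i=1..M. r 1 d 1 i * x i) \<le> (\<Sum>i=1..M. 1 * x i)"
    proof (rule sum_mono)
      fix i assume i: "i \<in> {1..M}"
      hence "r 1 d 1 i \<ge> 0" "x i \<ge> 0" using dfs(1) xnn by auto
      moreover have "r 1 d 1 i \<le> 1"
      proof -
        have "r 1 d 1 i \<le> (\<Sum>k=1..M. r 1 d 1 k)"
          using i dfs(1) by (intro member_le_sum) auto
        thus ?thesis using dfs(2) by linarith
      qed
      ultimately show "r 1 d 1 i * x i \<le> 1 * x i" by (intro mult_right_mono) auto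
    qed
    hence s2: "(\<Sum>i=1..M. r 1 d 1 i * x i) \<le> K" unfolding K_def by simp
    have "d * U = U - K" unfolding d_def using Un by (simp add: field_simps)
    moreover have "gain M p (r 1 d 1) (bt M p x 1) (st M p x d 1) = (\<Sum>i=1..M. r 1 d 1 i * x i) + d * U"
      using geq s1 by simp
    ultimately have "gain M p (r 1 d 1) (bt M p x 1) (st M p x d 1) \<le> U" using s2 by linarith
    hence "c * OPT M p (bt M p x 1) (st M p x d 1) < 0" using g1 Un by linarith
    moreover have "c * OPT M p (bt M p x 1) (st M p x d 1) > 0" using cpos Opos by simp
    ultimately show False by linarith
  qed
  have svsum: "(\<Sum>i\<le>M. r 1 1 k i * sv x j i) = x j * m k - E k" for k j
    unfolding m_def E_def using sum_sv[where x=x and M=M and \<rho>="r 1 1 k" and j=j] x0 by simp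
  have ICs: "x (Suc k) * m k - E k \<le> x (Suc k) * m (Suc k) - E (Suc k)" if "1 \<le> k" "Suc k \<le> M" for k
  proof -
    have B1: "Bd (bt M p x 1)" and S1: "Sd (st M p x 1 k)" and S2: "Sd (st M p x 1 (Suc k))"
      using Bin Sin that by auto
    have "1 * (\<Sum>i\<le>M. r 1 1 k i * sv x (Suc k) i) \<le> 1 * (\<Sum>i\<le>M. r 1 1 (Suc k) i * sv x (Suc k) i)"
      using sIC[OF B1 S2 S1] unfolding ssum r_def .
    thus ?thesis unfolding svsum by simp
  qed
  have mle: "m j \<le> 1" if "1 \<le> j" "j \<le> M" for j
    using dist_facts(2)[OF dist[of 1 1 j]] that unfolding m_def by simp
  have ind: "c * (\<Sum>i\<in>{1..<k}. 1 - x i / x (Suc i)) + E k / x k \<le> m k" if "1 \<le> k" "k \<le> M" for k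
    using that
  proof (induction k rule: nat_induct_at_least)
    case base
    have "0 \<le> x 1 * m 1 - E 1" using U0 svsum[of 1 1] by simp
    moreover have "x 1 > 0" using xpos base by simp
    ultimately show ?case by (simp add: divide_le_eq mult.commute)
  next
    case (Suc k)
    have xk: "x k > 0" and xk1: "x (Suc k) > 0" using xpos Suc by auto
    have mon: "x k \<le> x (Suc k)" using xmono Suc by simp
    have IH: "c * (\<Sum>i\<in>{1..<k}. 1 - x i / x (Suc i)) + E k / x k \<le> m k" using Suc by simp
    have ic: "x (Suc k) * m k - E k \<le> x (Suc k) * m (Suc k) - E (Suc k)" using ICs Suc by simp
    hence ic': "m k + (E (Suc k) - E k) / x (Suc k) \<le> m (Suc k)"
      using xk1 by (simp add: field_simps)
    have Ek: "c * x k \<le> E k" using Eb Suc by simp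
    have t0: "0 \<le> 1 / x k - 1 / x (Suc k)" using xk mon by (simp add: frac_le)
    have "c * x k * (1 / x k - 1 / x (Suc k)) \<le> E k * (1 / x k - 1 / x (Suc k))"
      using Ek t0 by (rule mult_right_mono)
    moreover have "c * x k * (1 / x k - 1 / x (Suc k)) = c * (1 - x k / x (Suc k))"
      using xk xk1 by (simp add: field_simps)
    moreover have "E k * (1 / x k - 1 / x (Suc k)) = E k / x k - E k / x (Suc k)"
      by (simp add: field_simps)
    ultimately have key1: "c * (1 - x k / x (Suc k)) \<le> E k / x k - E k / x (Suc k)" by linarith
    have sumeq: "(\<Sum>i\<in>{1..<Suc k}. 1 - x i / x (Suc i)) = (\<Sum>i\<in>{1..<k}. 1 - x i / x (Suc i)) + (1 - x k / x (Suc k))"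
      using Suc by simp
    have "(E (Suc k) - E k) / x (Suc k) = E (Suc k) / x (Suc k) - E k / x (Suc k)"
      by (simp add: diff_divide_distrib)
    moreover have "c * ((\<Sum>i\<in>{1..<k}. 1 - x i / x (Suc i)) + (1 - x k / x (Suc k)))
       = c * (\<Sum>i\<in>{1..<k}. 1 - x i / x (Suc i)) + c * (1 - x k / x (Suc k))"
      by (simp add: distrib_left)
    ultimately show ?case unfolding sumeq using IH ic' key1 by linarith
  qed
  have "c * (\<Sum>i\<in>{1..<M}. 1 - x i / x (Suc i)) + E M / x M \<le> m M" using ind M1 by simp
  moreover have "c \<le> E M / x M" using Eb[of M] M1 xpos[of M] by (simp add: le_divide_eq)
  moreover have "m M \<le> 1" using mle M1 by simp
  ultimately show ?thesis by (simp add: algebra_simps)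
qed

lemma bt_general: "x 0 = 0 \<Longrightarrow> buyer_general M (bt M p x a)"
  unfolding buyer_general_def general_val_def bt_def by auto

lemma st_general: "general_val M (st M p x d j)"
  unfolding general_val_def st_def by auto

lemma bt_sub: "buyer_submodular M (bt M p real a)"
  unfolding buyer_submodular_def submodular_val_def general_val_def bt_def
  by (auto simp: of_nat_diff algebra_simps)

lemma st_sub:
  assumes "d \<ge> 0"
  shows "submodular_val M (st M p real d j)"
  unfolding submodular_val_def
proof (intro conjI allI impI)
  show "general_val M (st M p real d j)" by (rule st_general)
next
  fix i assume i: "1 \<le> i \<and> i \<le> M - 1"
  show "st M p real d j (i + 1) - st M p real d j i \<le> st M p real d j i - st M p real d j (i - 1)"
  proof (cases "Suc i < M")
    case True
    hence "M - (i + 1) = M - i - 1" "M - (i - 1) = M - i + 1" "1 \<le> M - i" "i - 1 < M" using i by auto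
    thus ?thesis using True i unfolding st_def by (simp add: of_nat_diff algebra_simps)
  next
    case False
    hence Mi: "M = Suc i" using i by auto
    hence "M - i = 1" "M - (i - 1) = 2" "\<not> (i + 1 < M)" "i < M" "i - 1 < M" using i by auto
    hence "st M p real d j (i + 1) = 0" "st M p real d j i = d * (real j - 1) - p"
      "st M p real d j (i - 1) = d * (real j - 2) - 2 * p"
      unfolding st_def by auto
    moreover have "0 \<le> d * real j" using assms by simp
    ultimately show ?thesis by (simp add: algebra_simps)
  qed
qed

lemma harm: "M \<ge> 1 \<Longrightarrow> 1 + (\<Sum>k\<in>{1..<M}. 1 - real k / real (Suc k)) = (\<Sum>j=1..M. 1 / real j)"
proof (induction M rule: nat_induct_at_least)
  case base thus ?case by simp
next
  case (Suc n)
  have "1 - real n / real (Suc n) = 1 / real (Suc n)" by (simp add: field_simps)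
  thus ?case using Suc by simp
qed

lemma ratio_bound:
  fixes M :: nat and p c :: real
    and mech :: "(nat \<Rightarrow> real) \<Rightarrow> (nat \<Rightarrow> real) \<Rightarrow> (nat \<Rightarrow> real)"
  assumes "ereal c < competitive_ratio M p Bd Sd mech"
    and "Bd \<beta>" "Sd \<sigma>" "OPT M p \<beta> \<sigma> > 0"
  shows "c \<le> gain M p (mech \<beta> \<sigma>) \<beta> \<sigma> / OPT M p \<beta> \<sigma>"
proof -
  have "competitive_ratio M p Bd Sd mech \<le> ereal (gain M p (mech \<beta> \<sigma>) \<beta> \<sigma> / OPT M p \<beta> \<sigma>)"
    unfolding competitive_ratio_def using assms(2-4) by (intro Inf_lower) blast
  with assms(1) have "ereal c < ereal (gain M p (mech \<beta> \<sigma>) \<beta> \<sigma> / OPT M p \<beta> \<sigma>)"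
    by (rule less_le_trans)
  thus ?thesis by simp
qed

theorem corollary1:
  fixes M :: nat and p :: real
    and mech :: "(nat \<Rightarrow> real) \<Rightarrow> (nat \<Rightarrow> real) \<Rightarrow> (nat \<Rightarrow> real)"
  assumes "M \<ge> 1"
  shows "(DSIC M p (buyer_general M) (general_val M) mech \<longrightarrow>
           competitive_ratio M p (buyer_general M) (general_val M) mech \<le> ereal (1 / real M))
       \<and> (DSIC M p (buyer_submodular M) (submodular_val M) mech \<longrightarrow>
           competitive_ratio M p (buyer_submodular M) (submodular_val M) mech
             \<le> ereal (1 / (\<Sum>j=1..M. 1 / real j)))"
proof (intro conjI impI)
  assume ds: "DSIC M p (buyer_general M) (general_val M) mech"
  show "competitive_ratio M p (buyer_general M) (general_val M) mech \<le> ereal (1 / real M)"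
  proof (rule ccontr)
    assume "\<not> ?thesis"
    hence "ereal (1 / real M) < competitive_ratio M p (buyer_general M) (general_val M) mech" by simp
    then obtain c where c1: "ereal (1 / real M) < ereal c"
      and c2: "ereal c < competitive_ratio M p (buyer_general M) (general_val M) mech"
      using ereal_dense2 by blast
    have Mpos: "real M > 0" using assms by simp
    have cM: "1 / real M < c" using c1 by simp
    hence cM1: "c * real M > 1" using Mpos by (simp add: field_simps)
    have cpos: "c > 0" using cM Mpos by (smt (verit) divide_pos_pos)
    define R where "R = 1 + c * (real M - 1) / (c * real M - 1)"
    have R1: "R \<ge> 1" unfolding R_def using cM1 cpos assms by simp
    define x where "x i = (if i = 0 then 0 else R ^ i)" for i :: nat
    have kb: "c * (1 + (\<Sum>k\<in>{1..<M}. 1 - x k / x (Suc k))) \<le> 1"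
    proof (rule key[OF assms ds])
      show "x 0 = 0" by (simp add: x_def)
      show "\<And>i. 1 \<le> i \<Longrightarrow> i \<le> M \<Longrightarrow> 0 < x i" using R1 by (simp add: x_def)
      show "\<And>i. i < M \<Longrightarrow> x i \<le> x (Suc i)" using R1 by (simp add: x_def)
      show "\<And>a. 1 \<le> a \<Longrightarrow> buyer_general M (bt M p x a)" by (rule bt_general) (simp add: x_def)
      show "\<And>d j. 1 \<le> d \<Longrightarrow> 1 \<le> j \<Longrightarrow> j \<le> M \<Longrightarrow> general_val M (st M p x d j)" by (rule st_general)
      show "c > 0" by (rule cpos)
      show "\<And>\<beta> \<sigma>. buyer_general M \<beta> \<Longrightarrow> general_val M \<sigma> \<Longrightarrow> OPT M p \<beta> \<sigma> > 0 \<Longrightarrow>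
              c \<le> gain M p (mech \<beta> \<sigma>) \<beta> \<sigma> / OPT M p \<beta> \<sigma>"
        using ratio_bound[OF c2] by blast
    qed
    have "(\<Sum>k\<in>{1..<M}. 1 - x k / x (Suc k)) = (\<Sum>k\<in>{1..<M}. 1 - 1 / R)"
    proof (rule sum.cong)
      fix k assume "k \<in> {1..<M}"
      hence "k \<noteq> 0" by simp
      thus "1 - x k / x (Suc k) = 1 - 1 / R" using R1 by (simp add: x_def)
    qed simp
    also have "\<dots> = (real M - 1) * (1 - 1 / R)" using assms by (simp add: of_nat_diff)
    finally have seq: "(\<Sum>k\<in>{1..<M}. 1 - x k / x (Suc k)) = (real M - 1) * (1 - 1 / R)" .
    have Rpos: "R > 0" using R1 by simp
    have "R * (c * real M - 1) = (c * real M - 1) + c * (real M - 1)"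
      unfolding R_def using cM1 by (simp add: field_simps)
    hence "c * (real M - 1) < R * (c * real M - 1)" using cM1 by linarith
    hence "c * (real M - 1) / R < c * real M - 1" using Rpos by (simp add: divide_less_eq mult.commute)
    moreover have "c * (1 + (real M - 1) * (1 - 1 / R)) = c * real M - c * (real M - 1) / R"
      using Rpos by (simp add: field_simps)
    ultimately have "c * (1 + (real M - 1) * (1 - 1 / R)) > 1" by linarith
    with kb seq show False by simp
  qed
next
  assume ds: "DSIC M p (buyer_submodular M) (submodular_val M) mech"
  define Hm where "Hm = (\<Sum>j=1..M. 1 / real j)"
  have Hpos: "Hm > 0" unfolding Hm_def using assms
    by (intro sum_pos) auto
  show "competitive_ratio M p (buyer_submodular M) (submodular_val M) mech
             \<le> ereal (1 / (\<Sum>j=1..M. 1 / real j))"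
  proof (rule ccontr)
    assume "\<not> ?thesis"
    hence "ereal (1 / Hm) < competitive_ratio M p (buyer_submodular M) (submodular_val M) mech"
      unfolding Hm_def by simp
    then obtain c where c1: "ereal (1 / Hm) < ereal c"
      and c2: "ereal c < competitive_ratio M p (buyer_submodular M) (submodular_val M) mech"
      using ereal_dense2 by blast
    have cH: "1 / Hm < c" using c1 by simp
    have cpos: "c > 0" using cH Hpos by (smt (verit) divide_pos_pos)
    have kb: "c * (1 + (\<Sum>k\<in>{1..<M}. 1 - real k / real (Suc k))) \<le> 1"
    proof (rule key[OF assms ds])
      show "real 0 = 0" by simp
      show "\<And>i. 1 \<le> i \<Longrightarrow> i \<le> M \<Longrightarrow> 0 < real i" by simp
      show "\<And>i. i < M \<Longrightarrow> real i \<le> real (Suc i)" by simp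
      show "\<And>a. 1 \<le> a \<Longrightarrow> buyer_submodular M (bt M p real a)" by (rule bt_sub)
      show "\<And>d j. 1 \<le> d \<Longrightarrow> 1 \<le> j \<Longrightarrow> j \<le> M \<Longrightarrow> submodular_val M (st M p real d j)"
        by (rule st_sub) simp
      show "c > 0" by (rule cpos)
      show "\<And>\<beta> \<sigma>. buyer_submodular M \<beta> \<Longrightarrow> submodular_val M \<sigma> \<Longrightarrow> OPT M p \<beta> \<sigma> > 0 \<Longrightarrow>
              c \<le> gain M p (mech \<beta> \<sigma>) \<beta> \<sigma> / OPT M p \<beta> \<sigma>"
        using ratio_bound[OF c2] by blast
    qed
    hence "c * Hm \<le> 1" using harm[OF assms] unfolding Hm_def by simp
    moreover have "c * Hm > 1" using cH Hpos by (simp add: field_simps)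
    ultimately show False by simp
  qed
qed

end
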